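(* Let $0<\nu<1$ and $0\le \mu<1$. Then for every $t>0$, $$f_{\nu,\mu}(t)=\frac{1}{\pi}\int_0^\infty u^{-\mu}\,\exp\!\big(-ut-u^{\nu}\cos(\pi\nu)\big)\,\sin\!\big(u^{\nu}\sin(\pi\nu)+\pi\mu\big)\,du .$$
   Context: For $0<\nu<1$ and real $\rho$, $f_{\nu,\rho}$ denotes the inverse Laplace transform of $F(s)=s^{-\rho}e^{-s^{\nu}}$, i.e. $f_{\nu,\rho}(t)=\frac{1}{2\pi i}\int_{c-i\infty}^{c+i\infty}e^{st}s^{-\rho}e^{-s^{\nu}}\,ds$ for $t>0$, $c>0$, with principal branches of the powers of $s$; thus $\int_0^\infty e^{-st}f_{\nu,\rho}(t)\,dt=s^{-\rho}e^{-s^\nu}$. *)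

theory Defs
  imports "HOL-Analysis.Analysis"
begin

text \<open>Inverse Laplace transform of F(s) = s^(-rho) * exp(-s^nu), given by the
Bromwich integral along the vertical line Re s = c (c > 0), principal branches.
With s = c + i y, ds = i dy, so (1/(2 pi i)) ds = (1/(2 pi)) dy.\<close>
definition bromwich_f :: "real \<Rightarrow> real \<Rightarrow> real \<Rightarrow> real \<Rightarrow> complex" where
  "bromwich_f \<nu> \<rho> c t =
     complex_of_real (1 / (2 * pi)) *
     (LBINT y. exp (Complex c y * complex_of_real t)
               * Complex c y powr (- complex_of_real \<rho>)
               * exp (- (Complex c y powr complex_of_real \<nu>)))"

end

theory Submission
  imports Defs "HOL-Complex_Analysis.Complex_Analysis" "HOL-Real_Asymp.Real_Asymp"
begin


definition Lu :: "complex \<Rightarrow> complex" where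
  "Lu s = Ln (- \<i> * s) + \<i> * of_real (pi/2)"

definition Zu :: "real \<Rightarrow> real \<Rightarrow> real \<Rightarrow> complex \<Rightarrow> complex" where
  "Zu \<nu> \<mu> t s = s * of_real t - of_real \<mu> * Lu s - exp (of_real \<nu> * Lu s)"

definition Fu :: "real \<Rightarrow> real \<Rightarrow> real \<Rightarrow> complex \<Rightarrow> complex" where
  "Fu \<nu> \<mu> t s = exp (Zu \<nu> \<mu> t s)"

definition Fb :: "real \<Rightarrow> real \<Rightarrow> real \<Rightarrow> complex \<Rightarrow> complex" where
  "Fb \<nu> \<mu> t s = exp (s * complex_of_real t) * s powr (- complex_of_real \<mu>)
               * exp (- (s powr complex_of_real \<nu>))"

definition G :: "real \<Rightarrow> real \<Rightarrow> real \<Rightarrow> real \<Rightarrow> real" where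
  "G \<nu> \<mu> t u = u powr (- \<mu>) * exp (- u * t - u powr \<nu> * cos (pi * \<nu>))
                        * sin (u powr \<nu> * sin (pi * \<nu>) + pi * \<mu>)"

lemma exp_ii_pi_half: "exp (\<i> * complex_of_real (pi/2)) = \<i>"
  by (metis cis_conv_exp cis_pi_half)

lemma exp_Lu: "s \<noteq> 0 \<Longrightarrow> exp (Lu s) = s"
  unfolding Lu_def by (simp only: exp_add exp_ii_pi_half exp_Ln) (simp add: algebra_simps)

lemma Re_Lu: "s \<noteq> 0 \<Longrightarrow> Re (Lu s) = ln (cmod s)"
  unfolding Lu_def by (simp add: norm_mult)

lemma Im_Lu_bounds:
  assumes "s \<noteq> 0" "0 \<le> Im s"
  shows "0 \<le> Im (Lu s)" "Im (Lu s) \<le> pi"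
proof -
  have "\<bar>Im (Ln (- \<i> * s))\<bar> \<le> pi/2"
    using assms by (subst Re_Ln_pos_le) auto
  then show "0 \<le> Im (Lu s)" "Im (Lu s) \<le> pi" unfolding Lu_def by auto
qed

lemma Lu_eq_Ln:
  assumes "s \<noteq> 0" "0 \<le> Im s"
  shows "Lu s = Ln s"
proof (rule Ln_unique[symmetric])
  show "exp (Lu s) = s" using exp_Lu[OF assms(1)] .
  show "- pi < Im (Lu s)" using Im_Lu_bounds[OF assms] pi_gt_zero by linarith
  show "Im (Lu s) \<le> pi" using Im_Lu_bounds[OF assms] by linarith
qed

lemma Fu_eq_Fb:
  assumes "s \<noteq> 0" "0 \<le> Im s"
  shows "Fu \<nu> \<mu> t s = Fb \<nu> \<mu> t s"
  using assms unfolding Fu_def Fb_def Zu_def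
  by (simp add: powr_def Lu_eq_Ln exp_diff exp_add exp_minus field_simps)

lemma norm_Fu: "norm (Fu \<nu> \<mu> t s) = exp (Re (Zu \<nu> \<mu> t s))"
  unfolding Fu_def by simp

lemma Re_Zu:
  assumes "s \<noteq> 0"
  shows "Re (Zu \<nu> \<mu> t s) = t * Re s - \<mu> * ln (cmod s) - exp (\<nu> * ln (cmod s)) * cos (\<nu> * Im (Lu s))"
  using assms unfolding Zu_def by (simp add: Re_exp Re_Lu mult.commute)

lemma Re_polar_Lu:
  assumes "s \<noteq> 0"
  shows "Re s = cmod s * cos (Im (Lu s))"
proof -
  have "Re s = Re (exp (Lu s))" using exp_Lu[OF assms] by simp
  also have "\<dots> = cmod s * cos (Im (Lu s))" using assms by (simp add: Re_exp Re_Lu)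
  finally show ?thesis .
qed

lemma Lu_neg:
  assumes "0 < u"
  shows "Lu (- complex_of_real u) = complex_of_real (ln u) + \<i> * pi"
proof -
  have "Lu (- complex_of_real u) = Ln (- complex_of_real u)"
    using assms by (intro Lu_eq_Ln) auto
  also have "\<dots> = complex_of_real (ln u) + \<i> * pi"
    using assms by (intro Ln_unique) (auto simp: exp_add exp_of_real)
  finally show ?thesis .
qed

lemma Lu_pos:
  assumes "0 < x"
  shows "Lu (complex_of_real x) = complex_of_real (ln x)"
  using assms by (subst Lu_eq_Ln) (auto simp: Ln_of_real)

lemma Im_Fu_neg:
  assumes "0 < u"
  shows "Im (Fu \<nu> \<mu> t (- complex_of_real u)) = - G \<nu> \<mu> t u"
proof -
  have "Im (Fu \<nu> \<mu> t (- complex_of_real u)) =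
        exp (Re (Zu \<nu> \<mu> t (- complex_of_real u))) * sin (Im (Zu \<nu> \<mu> t (- complex_of_real u)))"
    unfolding Fu_def by (simp add: Im_exp)
  also have "Re (Zu \<nu> \<mu> t (- complex_of_real u)) = - u * t - \<mu> * ln u - exp (\<nu> * ln u) * cos (\<nu> * pi)"
    using assms unfolding Zu_def by (simp add: Lu_neg Re_exp field_simps)
  also have "Im (Zu \<nu> \<mu> t (- complex_of_real u)) = - (\<mu> * pi) - exp (\<nu> * ln u) * sin (\<nu> * pi)"
    using assms unfolding Zu_def by (simp add: Lu_neg Im_exp field_simps)
  finally have "Im (Fu \<nu> \<mu> t (- complex_of_real u)) =
     exp (- u * t - \<mu> * ln u - exp (\<nu> * ln u) * cos (\<nu> * pi)) *
     sin (- (\<mu> * pi) - exp (\<nu> * ln u) * sin (\<nu> * pi))" .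
  moreover have "exp (- u * t - \<mu> * ln u - exp (\<nu> * ln u) * cos (\<nu> * pi))
      = u powr (- \<mu>) * exp (- u * t - u powr \<nu> * cos (pi * \<nu>))"
    using assms by (simp add: powr_def mult_exp_exp mult.commute[of pi])
  moreover have "sin (- (\<mu> * pi) - exp (\<nu> * ln u) * sin (\<nu> * pi))
      = - sin (u powr \<nu> * sin (pi * \<nu>) + pi * \<mu>)"
  proof -
    have "- (\<mu> * pi) - exp (\<nu> * ln u) * sin (\<nu> * pi) = - (u powr \<nu> * sin (pi * \<nu>) + pi * \<mu>)"
      using assms by (simp add: powr_def mult.commute[of pi])
    then show ?thesis by (simp only: sin_minus)
  qed
  ultimately show ?thesis unfolding G_def by simp
qed

lemma Im_Fu_pos:
  assumes "0 < x"
  shows "Im (Fu \<nu> \<mu> t (complex_of_real x)) = 0"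
proof -
  have "Im (Zu \<nu> \<mu> t (complex_of_real x)) = 0"
    using assms unfolding Zu_def by (simp add: Lu_pos of_real_mult[symmetric] exp_of_real del: of_real_mult)
  then show ?thesis unfolding Fu_def by (simp add: Im_exp)
qed



lemma Fu_holo:
  assumes "open S" "\<And>s. s \<in> S \<Longrightarrow> - \<i> * s \<notin> \<real>\<^sub>\<le>\<^sub>0"
  shows "Fu \<nu> \<mu> t holomorphic_on S"
  unfolding Fu_def Zu_def Lu_def using assms
  by (intro holomorphic_intros) auto

lemma Fu_cont:
  assumes "\<And>s. s \<in> S \<Longrightarrow> - \<i> * s \<notin> \<real>\<^sub>\<le>\<^sub>0"
  shows "continuous_on S (Fu \<nu> \<mu> t)"
  unfolding Fu_def Zu_def Lu_def using assms
  by (intro continuous_intros) auto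

lemma path_indep:
  assumes "convex S" "open S" "\<And>s. s \<in> S \<Longrightarrow> - \<i> * s \<notin> \<real>\<^sub>\<le>\<^sub>0"
  obtains g where "\<And>a b. a \<in> S \<Longrightarrow> b \<in> S \<Longrightarrow> contour_integral (linepath a b) (Fu \<nu> \<mu> t) = g b - g a"
proof -
  obtain g where g: "\<And>x. x \<in> S \<Longrightarrow> (g has_field_derivative Fu \<nu> \<mu> t x) (at x within S)"
    using holomorphic_convex_primitive'[OF assms(1,2) Fu_holo[OF assms(2,3)]] by blast
  have "contour_integral (linepath a b) (Fu \<nu> \<mu> t) = g b - g a" if "a \<in> S" "b \<in> S" for a b
  proof -
    have "(Fu \<nu> \<mu> t has_contour_integral (g (pathfinish (linepath a b)) - g (pathstart (linepath a b)))) (linepath a b)"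
      by (rule contour_integral_primitive[OF g]) (use that assms(1) closed_segment_subset in auto)
    then show ?thesis by (simp add: contour_integral_unique)
  qed
  then show ?thesis using that by blast
qed

lemma SL_props:
  assumes "0 < e"
  shows "convex {s. Im s - Re s > e/2}" "open {s. Im s - Re s > e/2}"
    "\<And>s. s \<in> {s. Im s - Re s > e/2} \<Longrightarrow> - \<i> * s \<notin> \<real>\<^sub>\<le>\<^sub>0"
proof -
  have eq: "{s. Im s - Re s > e/2} = {s. inner (Complex (-1) 1) s > e/2}"
    by (auto simp: inner_complex_def)
  show "convex {s. Im s - Re s > e/2}" unfolding eq by (rule convex_halfspace_gt)
  show "open {s. Im s - Re s > e/2}" unfolding eq by (rule open_halfspace_gt)
  show "- \<i> * s \<notin> \<real>\<^sub>\<le>\<^sub>0" if "s \<in> {s. Im s - Re s > e/2}" for s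
    using that assms by (auto simp: complex_nonpos_Reals_iff)
qed

lemma SR_props:
  assumes "0 < e"
  shows "convex {s. Im s + Re s > e/2}" "open {s. Im s + Re s > e/2}"
    "\<And>s. s \<in> {s. Im s + Re s > e/2} \<Longrightarrow> - \<i> * s \<notin> \<real>\<^sub>\<le>\<^sub>0"
proof -
  have eq: "{s. Im s + Re s > e/2} = {s. inner (Complex 1 1) s > e/2}"
    by (auto simp: inner_complex_def)
  show "convex {s. Im s + Re s > e/2}" unfolding eq by (rule convex_halfspace_gt)
  show "open {s. Im s + Re s > e/2}" unfolding eq by (rule open_halfspace_gt)
  show "- \<i> * s \<notin> \<real>\<^sub>\<le>\<^sub>0" if "s \<in> {s. Im s + Re s > e/2}" for s
    using that assms by (auto simp: complex_nonpos_Reals_iff)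
qed

abbreviation CI where "CI \<nu> \<mu> t a b \<equiv> contour_integral (linepath a b) (Fu \<nu> \<mu> t)"

lemma contour_identity:
  assumes "0 < e" "e < c" "e < R"
  shows "CI \<nu> \<mu> t (Complex (-R) 0) (Complex (-e) 0)
     + (CI \<nu> \<mu> t (Complex (-e) 0) (Complex (-e) e) + CI \<nu> \<mu> t (Complex (-e) e) (Complex 0 e)
        + CI \<nu> \<mu> t (Complex 0 e) (Complex e e) + CI \<nu> \<mu> t (Complex e e) (Complex e 0))
     + CI \<nu> \<mu> t (Complex e 0) (Complex c 0)
     + CI \<nu> \<mu> t (Complex c 0) (Complex c R)
     + (CI \<nu> \<mu> t (Complex c R) (Complex 0 R) + CI \<nu> \<mu> t (Complex 0 R) (Complex (-R) R)
        + CI \<nu> \<mu> t (Complex (-R) R) (Complex (-R) 0)) = 0"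
proof -
  obtain gL where gL: "\<And>a b. a \<in> {s. Im s - Re s > e/2} \<Longrightarrow> b \<in> {s. Im s - Re s > e/2} \<Longrightarrow>
      CI \<nu> \<mu> t a b = gL b - gL a"
    using path_indep[OF SL_props[OF assms(1)]] by metis
  obtain gR where gR: "\<And>a b. a \<in> {s. Im s + Re s > e/2} \<Longrightarrow> b \<in> {s. Im s + Re s > e/2} \<Longrightarrow>
      CI \<nu> \<mu> t a b = gR b - gR a"
    using path_indep[OF SR_props[OF assms(1)]] by metis
  have rev: "CI \<nu> \<mu> t (Complex 0 e) (Complex 0 R) = - CI \<nu> \<mu> t (Complex 0 R) (Complex 0 e)"
  proof (rule contour_integral_reverse_linepath)
    have "closed_segment (Complex 0 e) (Complex 0 R) \<subseteq> {s. Im s - Re s > e/2}"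
      by (rule closed_segment_subset) (use assms SL_props[OF assms(1)] in auto)
    then show "continuous_on (closed_segment (Complex 0 e) (Complex 0 R)) (Fu \<nu> \<mu> t)"
      using SL_props(3)[OF assms(1)] by (intro Fu_cont) blast
  qed
  have L: "CI \<nu> \<mu> t (Complex (-R) 0) (Complex (-e) 0) + CI \<nu> \<mu> t (Complex (-e) 0) (Complex (-e) e)
     + CI \<nu> \<mu> t (Complex (-e) e) (Complex 0 e) + CI \<nu> \<mu> t (Complex 0 e) (Complex 0 R)
     + CI \<nu> \<mu> t (Complex 0 R) (Complex (-R) R) + CI \<nu> \<mu> t (Complex (-R) R) (Complex (-R) 0) = 0"
    using assms by (simp add: gL)
  have Rr: "CI \<nu> \<mu> t (Complex e 0) (Complex c 0) + CI \<nu> \<mu> t (Complex c 0) (Complex c R)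
     + CI \<nu> \<mu> t (Complex c R) (Complex 0 R) + CI \<nu> \<mu> t (Complex 0 R) (Complex 0 e)
     + CI \<nu> \<mu> t (Complex 0 e) (Complex e e) + CI \<nu> \<mu> t (Complex e e) (Complex e 0) = 0"
    using assms by (simp add: gR)
  show ?thesis using L Rr rev by (simp add: algebra_simps)
qed



lemma seg_bounds:
  assumes "z \<in> closed_segment a b"
  shows "min (Re a) (Re b) \<le> Re z" "Re z \<le> max (Re a) (Re b)"
        "min (Im a) (Im b) \<le> Im z" "Im z \<le> max (Im a) (Im b)"
proof -
  have "Re z \<in> closed_segment (Re a) (Re b)"
    using assms closed_segment_linear_image[of Re a b] bounded_linear.linear[OF bounded_linear_Re] by blast
  then show "min (Re a) (Re b) \<le> Re z" "Re z \<le> max (Re a) (Re b)"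
    by (auto simp: closed_segment_eq_real_ivl split: if_splits)
  have "Im z \<in> closed_segment (Im a) (Im b)"
    using assms closed_segment_linear_image[of Im a b] bounded_linear.linear[OF bounded_linear_Im] by blast
  then show "min (Im a) (Im b) \<le> Im z" "Im z \<le> max (Im a) (Im b)"
    by (auto simp: closed_segment_eq_real_ivl split: if_splits)
qed

lemma CI_has:
  assumes "convex C" "a \<in> C" "b \<in> C" "\<And>s. s \<in> C \<Longrightarrow> - \<i> * s \<notin> \<real>\<^sub>\<le>\<^sub>0"
  shows "(Fu \<nu> \<mu> t has_contour_integral CI \<nu> \<mu> t a b) (linepath a b)"
proof -
  have "closed_segment a b \<subseteq> C" using assms closed_segment_subset by blast
  then have "continuous_on (closed_segment a b) (Fu \<nu> \<mu> t)"
    using assms(4) by (intro Fu_cont) blast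
  then show ?thesis
    by (intro has_contour_integral_integral contour_integrable_continuous_linepath)
qed

lemma hci_affine:
  fixes a b :: real
  assumes "a < b"
  shows "(f has_contour_integral J) (linepath (w + of_real a * d) (w + of_real b * d)) \<longleftrightarrow>
         ((\<lambda>x. d * f (w + of_real x * d)) has_integral J) {a..b}"
proof -
  have "(f has_contour_integral J) (linepath (w + of_real a * d) (w + of_real b * d)) \<longleftrightarrow>
        ((\<lambda>z. d * f (w + z * d)) has_contour_integral J) (linepath (of_real a) (of_real b))"
    unfolding has_contour_integral_linepath
    by (rule arg_cong2[where f="\<lambda>f S. (f has_integral J) S"])
       (auto simp: linepath_def algebra_simps fun_eq_iff)
  also have "\<dots> \<longleftrightarrow> ((\<lambda>x. d * f (w + of_real x * d)) has_integral J) {a..b}"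
    using assms by (subst has_contour_integral_linepath_Reals_iff) auto
  finally show ?thesis .
qed

lemma convex_Re_gt: "convex {s::complex. Re s > 0}"
proof -
  have "{s::complex. Re s > 0} = {s. inner 1 s > 0}" by (auto simp: inner_complex_def)
  then show ?thesis using convex_halfspace_gt by metis
qed

lemma convex_Re_lt: "convex {s::complex. Re s < 0}"
proof -
  have "{s::complex. Re s < 0} = {s. inner 1 s < 0}" by (auto simp: inner_complex_def)
  then show ?thesis using convex_halfspace_lt by metis
qed

lemma V_eq:
  assumes "0 < c" "0 < R"
  shows "CI \<nu> \<mu> t (Complex c 0) (Complex c R) = \<i> * integral {0..R} (\<lambda>y. Fb \<nu> \<mu> t (Complex c y))"
proof -
  have h: "(Fu \<nu> \<mu> t has_contour_integral CI \<nu> \<mu> t (Complex c 0) (Complex c R)) (linepath (Complex c 0) (Complex c R))"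
    by (rule CI_has[OF convex_Re_gt]) (use assms in \<open>auto simp: complex_nonpos_Reals_iff\<close>)
  have e: "Complex c 0 = of_real c + of_real 0 * \<i>" "Complex c R = of_real c + of_real R * \<i>"
    by (auto simp: complex_eq_iff)
  have "((\<lambda>x. \<i> * Fu \<nu> \<mu> t (of_real c + of_real x * \<i>)) has_integral CI \<nu> \<mu> t (Complex c 0) (Complex c R)) {0..R}"
    using h assms unfolding e by (subst (asm) hci_affine) auto
  then have "((\<lambda>x. \<i> * Fb \<nu> \<mu> t (Complex c x)) has_integral CI \<nu> \<mu> t (Complex c 0) (Complex c R)) {0..R}"
  proof (rule has_integral_eq[rotated])
    fix x assume "x \<in> {0..R}"
    then show "\<i> * Fu \<nu> \<mu> t (of_real c + of_real x * \<i>) = \<i> * Fb \<nu> \<mu> t (Complex c x)"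
      using assms by (subst Fu_eq_Fb) (auto simp: Complex_eq mult.commute complex_eq_iff)
  qed
  then have "((\<lambda>x. Fb \<nu> \<mu> t (Complex c x)) has_integral CI \<nu> \<mu> t (Complex c 0) (Complex c R) / \<i>) {0..R}"
    by (subst (asm) has_integral_mult_right_iff) auto
  then have "integral {0..R} (\<lambda>x. Fb \<nu> \<mu> t (Complex c x)) = CI \<nu> \<mu> t (Complex c 0) (Complex c R) / \<i>"
    by (rule integral_unique)
  then show ?thesis by (simp add: field_simps)
qed

lemma N_eq:
  assumes "0 < e" "e < R"
  shows "Im (CI \<nu> \<mu> t (Complex (-R) 0) (Complex (-e) 0)) = - integral {e..R} (G \<nu> \<mu> t)"
proof -
  have h: "(Fu \<nu> \<mu> t has_contour_integral CI \<nu> \<mu> t (Complex (-R) 0) (Complex (-e) 0)) (linepath (Complex (-R) 0) (Complex (-e) 0))"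
    by (rule CI_has[OF convex_Re_lt]) (use assms in \<open>auto simp: complex_nonpos_Reals_iff\<close>)
  have "((\<lambda>x. Fu \<nu> \<mu> t (of_real x)) has_integral CI \<nu> \<mu> t (Complex (-R) 0) (Complex (-e) 0)) {-R..-e}"
    using h assms by (subst (asm) has_contour_integral_linepath_Reals_iff) (auto simp: complex_is_Real_iff)
  then have "((\<lambda>x. Fu \<nu> \<mu> t (of_real (- x))) has_integral CI \<nu> \<mu> t (Complex (-R) 0) (Complex (-e) 0)) {e..R}"
    using has_integral_reflect_real[where f="\<lambda>x. Fu \<nu> \<mu> t (of_real (- x))" and a=e and b=R] by simp
  then have "((\<lambda>x. Im (Fu \<nu> \<mu> t (of_real (- x)))) has_integral Im (CI \<nu> \<mu> t (Complex (-R) 0) (Complex (-e) 0))) {e..R}"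
    using has_integral_linear[OF _ bounded_linear_Im] by (simp add: o_def)
  then have "((\<lambda>x. - G \<nu> \<mu> t x) has_integral Im (CI \<nu> \<mu> t (Complex (-R) 0) (Complex (-e) 0))) {e..R}"
  proof (rule has_integral_eq[rotated])
    fix x assume "x \<in> {e..R}"
    then show "Im (Fu \<nu> \<mu> t (of_real (- x))) = - G \<nu> \<mu> t x"
      using assms Im_Fu_neg[of x] by simp
  qed
  then show ?thesis using integral_unique integral_neg has_integral_integrable
    by (metis has_integral_neg_iff)
qed

lemma P_eq:
  assumes "0 < e" "e < c"
  shows "Im (CI \<nu> \<mu> t (Complex e 0) (Complex c 0)) = 0"
proof -
  have h: "(Fu \<nu> \<mu> t has_contour_integral CI \<nu> \<mu> t (Complex e 0) (Complex c 0)) (linepath (Complex e 0) (Complex c 0))"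
    by (rule CI_has[OF convex_Re_gt]) (use assms in \<open>auto simp: complex_nonpos_Reals_iff\<close>)
  have "((\<lambda>x. Fu \<nu> \<mu> t (of_real x)) has_integral CI \<nu> \<mu> t (Complex e 0) (Complex c 0)) {e..c}"
    using h assms by (subst (asm) has_contour_integral_linepath_Reals_iff) (auto simp: complex_is_Real_iff)
  then have "((\<lambda>x. Im (Fu \<nu> \<mu> t (of_real x))) has_integral Im (CI \<nu> \<mu> t (Complex e 0) (Complex c 0))) {e..c}"
    using has_integral_linear[OF _ bounded_linear_Im] by (simp add: o_def)
  then have "((\<lambda>x. 0) has_integral Im (CI \<nu> \<mu> t (Complex e 0) (Complex c 0))) {e..c}"
    by (rule has_integral_eq[rotated]) (use assms Im_Fu_pos in auto)
  then show ?thesis by (simp add: has_integral_0_eq)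
qed



definition phi0 :: "real \<Rightarrow> real" where "phi0 \<nu> = pi * (3 - \<nu>) / 4"

lemma phi0_props:
  assumes "0 < \<nu>" "\<nu> < 1"
  shows "pi/2 < phi0 \<nu>" "phi0 \<nu> < pi" "\<nu> * phi0 \<nu> < pi/2" "0 < cos (\<nu> * phi0 \<nu>)" "cos (phi0 \<nu>) < 0"
proof -
  have "0 < pi * \<nu>" "pi * \<nu> < pi" using assms pi_gt_zero by auto
  moreover have "phi0 \<nu> = 3 * pi / 4 - pi * \<nu> / 4" unfolding phi0_def by (simp add: field_simps)
  ultimately show a: "pi/2 < phi0 \<nu>" "phi0 \<nu> < pi" using pi_gt_zero by linarith+
  have "\<nu> * (3 - \<nu>) < 2"
  proof -
    have "0 < (1 - \<nu>) * (2 - \<nu>)" using assms by (intro mult_pos_pos) auto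
    then show ?thesis by (simp add: algebra_simps)
  qed
  then have "pi * (\<nu> * (3 - \<nu>)) < pi * 2" using pi_gt_zero by (intro mult_strict_left_mono) auto
  then show b: "\<nu> * phi0 \<nu> < pi/2" unfolding phi0_def by (simp add: field_simps)
  have "0 < \<nu> * phi0 \<nu>" using assms a pi_gt_zero by (intro mult_pos_pos) auto
  then show "0 < cos (\<nu> * phi0 \<nu>)" using b by (intro cos_gt_zero) auto
  have "0 < cos (pi - phi0 \<nu>)" using a by (intro cos_gt_zero) auto
  then show "cos (phi0 \<nu>) < 0" by (simp add: cos_diff)
qed

lemma Zu_bound_big:
  assumes "0 < \<nu>" "\<nu> < 1" "0 \<le> \<mu>" "0 < t" "1 \<le> R"
    and s: "0 \<le> Im s" "R \<le> cmod s" "cmod s \<le> 3 * R" "Re s \<le> c"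
  shows "Re (Zu \<nu> \<mu> t s) \<le> max (c * t - cos (\<nu> * phi0 \<nu>) * R powr \<nu>)
                                  (t * R * cos (phi0 \<nu>) + (3 * R) powr \<nu>)"
proof -
  have s0: "s \<noteq> 0" using s assms by auto
  define \<theta> where "\<theta> = Im (Lu s)"
  have th: "0 \<le> \<theta>" "\<theta> \<le> pi" using Im_Lu_bounds[OF s0 s(1)] by (auto simp: \<theta>_def)
  have ReZ: "Re (Zu \<nu> \<mu> t s) = t * Re s - \<mu> * ln (cmod s) - cmod s powr \<nu> * cos (\<nu> * \<theta>)"
    using Re_Zu[OF s0] s0 by (simp add: \<theta>_def powr_def)
  have lnpos: "0 \<le> \<mu> * ln (cmod s)" using assms s by (intro mult_nonneg_nonneg) auto
  have P: "pi/2 < phi0 \<nu>" "phi0 \<nu> < pi" "\<nu> * phi0 \<nu> < pi/2" "0 < cos (\<nu> * phi0 \<nu>)" "cos (phi0 \<nu>) < 0"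
    using phi0_props[OF assms(1,2)] by auto
  show ?thesis
  proof (cases "\<theta> \<le> phi0 \<nu>")
    case True
    have "cos (\<nu> * phi0 \<nu>) \<le> cos (\<nu> * \<theta>)"
    proof (rule cos_monotone_0_pi_le)
      show "0 \<le> \<nu> * \<theta>" using assms th by auto
      show "\<nu> * \<theta> \<le> \<nu> * phi0 \<nu>" using True assms by (intro mult_left_mono) auto
      show "\<nu> * phi0 \<nu> \<le> pi" using P by linarith
    qed
    moreover have "R powr \<nu> \<le> cmod s powr \<nu>" using assms s by (intro powr_mono2) auto
    ultimately have "R powr \<nu> * cos (\<nu> * phi0 \<nu>) \<le> cmod s powr \<nu> * cos (\<nu> * \<theta>)"
      using P by (intro mult_mono) auto
    moreover have "t * Re s \<le> t * c" using assms s by (intro mult_left_mono) auto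
    ultimately have "Re (Zu \<nu> \<mu> t s) \<le> c * t - cos (\<nu> * phi0 \<nu>) * R powr \<nu>"
      using ReZ lnpos by (simp add: algebra_simps)
    then show ?thesis by linarith
  next
    case False
    have "cos \<theta> \<le> cos (phi0 \<nu>)"
      by (rule cos_monotone_0_pi_le) (use False th P pi_gt_zero in auto)
    have Res: "Re s = cmod s * cos \<theta>" using Re_polar_Lu[OF s0] by (simp add: \<theta>_def)
    have "cmod s * cos \<theta> \<le> cmod s * cos (phi0 \<nu>)"
      using \<open>cos \<theta> \<le> cos (phi0 \<nu>)\<close> by (intro mult_left_mono) auto
    also have "\<dots> \<le> R * cos (phi0 \<nu>)"
      using P s by (intro mult_right_mono_neg) auto
    finally have "t * Re s \<le> t * (R * cos (phi0 \<nu>))" using Res assms by (intro mult_left_mono) auto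
    moreover have "- (cmod s powr \<nu> * cos (\<nu> * \<theta>)) \<le> cmod s powr \<nu>"
    proof -
      have "- cos (\<nu> * \<theta>) \<le> 1" by simp
      then have "cmod s powr \<nu> * (- cos (\<nu> * \<theta>)) \<le> cmod s powr \<nu> * 1"
        by (intro mult_left_mono) auto
      then show ?thesis by simp
    qed
    moreover have "cmod s powr \<nu> \<le> (3 * R) powr \<nu>" using assms s by (intro powr_mono2) auto
    ultimately have "Re (Zu \<nu> \<mu> t s) \<le> t * R * cos (phi0 \<nu>) + (3 * R) powr \<nu>"
      using ReZ lnpos by (simp add: algebra_simps)
    then show ?thesis by linarith
  qed
qed

lemma Zu_bound_small:
  assumes "0 < \<nu>" "\<nu> < 1" "0 \<le> \<mu>" "0 < t" "0 < e"
    and s: "e \<le> cmod s" "cmod s \<le> 1"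
  shows "Re (Zu \<nu> \<mu> t s) \<le> t + 1 - \<mu> * ln e"
proof -
  have s0: "s \<noteq> 0" using s assms by auto
  define \<theta> where "\<theta> = Im (Lu s)"
  have ReZ: "Re (Zu \<nu> \<mu> t s) = t * Re s - \<mu> * ln (cmod s) - cmod s powr \<nu> * cos (\<nu> * \<theta>)"
    using Re_Zu[OF s0] s0 by (simp add: \<theta>_def powr_def)
  have "t * Re s \<le> t * 1" using assms s abs_Re_le_cmod[of s] by (intro mult_left_mono) auto
  moreover have "\<mu> * ln e \<le> \<mu> * ln (cmod s)" using assms s by (intro mult_left_mono ln_mono) auto
  moreover have "- (cmod s powr \<nu> * cos (\<nu> * \<theta>)) \<le> 1"
  proof -
    have "- cos (\<nu> * \<theta>) \<le> 1" by simp
    then have "cmod s powr \<nu> * (- cos (\<nu> * \<theta>)) \<le> cmod s powr \<nu> * 1"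
      by (intro mult_left_mono) auto
    moreover have "cmod s powr \<nu> \<le> 1" using s assms by (intro powr_le1) auto
    ultimately show ?thesis by simp
  qed
  ultimately show ?thesis using ReZ by linarith
qed



lemma seg_norm_bound:
  assumes "(Fu \<nu> \<mu> t has_contour_integral J) (linepath a b)"
    and "\<And>x. x \<in> closed_segment a b \<Longrightarrow> Re (Zu \<nu> \<mu> t x) \<le> M"
  shows "norm J \<le> exp M * norm (b - a)"
  using assms(1)
  by (rule has_contour_integral_bound_linepath) (use assms(2) in \<open>auto simp: norm_Fu\<close>)

lemma Complex_diff_Complex: "Complex a b - Complex c d = Complex (a - c) (b - d)"
  by (simp add: complex_eq_iff)

lemma SL_mem: "Im s - Re s > e/2 \<Longrightarrow> s \<in> {s. Im s - Re s > e/2}" by simp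
lemma SR_mem: "Im s + Re s > e/2 \<Longrightarrow> s \<in> {s. Im s + Re s > e/2}" by simp

lemma E_bound:
  assumes "0 < \<nu>" "\<nu> < 1" "0 \<le> \<mu>" "0 < t" "0 < c" "1 \<le> R" "c \<le> R"
  shows "norm (CI \<nu> \<mu> t (Complex c R) (Complex 0 R) + CI \<nu> \<mu> t (Complex 0 R) (Complex (-R) R)
               + CI \<nu> \<mu> t (Complex (-R) R) (Complex (-R) 0))
         \<le> (c + 2 * R) * (exp (c * t - cos (\<nu> * phi0 \<nu>) * R powr \<nu>)
                          + exp (t * R * cos (phi0 \<nu>) + (3 * R) powr \<nu>))"
proof -
  define M where "M = max (c * t - cos (\<nu> * phi0 \<nu>) * R powr \<nu>) (t * R * cos (phi0 \<nu>) + (3 * R) powr \<nu>)"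
  have pt: "Re (Zu \<nu> \<mu> t x) \<le> M" if "0 \<le> Im x" "R \<le> cmod x" "cmod x \<le> 3 * R" "Re x \<le> c" for x
    unfolding M_def by (rule Zu_bound_big) (use assms that in auto)
  have b1: "norm (CI \<nu> \<mu> t (Complex c R) (Complex 0 R)) \<le> exp M * c"
  proof -
    have "norm (CI \<nu> \<mu> t (Complex c R) (Complex 0 R)) \<le> exp M * norm (Complex 0 R - Complex c R)"
    proof (rule seg_norm_bound)
      show "(Fu \<nu> \<mu> t has_contour_integral CI \<nu> \<mu> t (Complex c R) (Complex 0 R)) (linepath (Complex c R) (Complex 0 R))"
        by (rule CI_has[OF SR_props(1)[of 1] SR_mem SR_mem SR_props(3)]) (use assms in auto)
      fix x assume "x \<in> closed_segment (Complex c R) (Complex 0 R)"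
      from seg_bounds[OF this] assms have x: "Im x = R" "0 \<le> Re x" "Re x \<le> c" by auto
      have "cmod x \<le> \<bar>Re x\<bar> + \<bar>Im x\<bar>" by (rule cmod_le)
      moreover have "\<bar>Im x\<bar> \<le> cmod x" by (rule abs_Im_le_cmod)
      ultimately show "Re (Zu \<nu> \<mu> t x) \<le> M" using x assms by (intro pt) auto
    qed
    then show ?thesis using assms by (simp add: Complex_diff_Complex complex_norm)
  qed
  have b2: "norm (CI \<nu> \<mu> t (Complex 0 R) (Complex (-R) R)) \<le> exp M * R"
  proof -
    have "norm (CI \<nu> \<mu> t (Complex 0 R) (Complex (-R) R)) \<le> exp M * norm (Complex (-R) R - Complex 0 R)"
    proof (rule seg_norm_bound)
      show "(Fu \<nu> \<mu> t has_contour_integral CI \<nu> \<mu> t (Complex 0 R) (Complex (-R) R)) (linepath (Complex 0 R) (Complex (-R) R))"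
        by (rule CI_has[OF SL_props(1)[of 1] SL_mem SL_mem SL_props(3)]) (use assms in auto)
      fix x assume "x \<in> closed_segment (Complex 0 R) (Complex (-R) R)"
      from seg_bounds[OF this] assms have x: "Im x = R" "-R \<le> Re x" "Re x \<le> 0" by auto
      have "cmod x \<le> \<bar>Re x\<bar> + \<bar>Im x\<bar>" by (rule cmod_le)
      moreover have "\<bar>Im x\<bar> \<le> cmod x" by (rule abs_Im_le_cmod)
      ultimately show "Re (Zu \<nu> \<mu> t x) \<le> M" using x assms by (intro pt) auto
    qed
    then show ?thesis using assms by (simp add: Complex_diff_Complex complex_norm)
  qed
  have b3: "norm (CI \<nu> \<mu> t (Complex (-R) R) (Complex (-R) 0)) \<le> exp M * R"
  proof -
    have "norm (CI \<nu> \<mu> t (Complex (-R) R) (Complex (-R) 0)) \<le> exp M * norm (Complex (-R) 0 - Complex (-R) R)"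
    proof (rule seg_norm_bound)
      show "(Fu \<nu> \<mu> t has_contour_integral CI \<nu> \<mu> t (Complex (-R) R) (Complex (-R) 0)) (linepath (Complex (-R) R) (Complex (-R) 0))"
        by (rule CI_has[OF SL_props(1)[of 1] SL_mem SL_mem SL_props(3)]) (use assms in auto)
      fix x assume "x \<in> closed_segment (Complex (-R) R) (Complex (-R) 0)"
      from seg_bounds[OF this] assms have x: "Re x = -R" "0 \<le> Im x" "Im x \<le> R" by auto
      have "cmod x \<le> \<bar>Re x\<bar> + \<bar>Im x\<bar>" by (rule cmod_le)
      moreover have "\<bar>Re x\<bar> \<le> cmod x" by (rule abs_Re_le_cmod)
      ultimately show "Re (Zu \<nu> \<mu> t x) \<le> M" using x assms by (intro pt) auto
    qed
    then show ?thesis using assms by (simp add: Complex_diff_Complex complex_norm)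
  qed
  have "norm (CI \<nu> \<mu> t (Complex c R) (Complex 0 R) + CI \<nu> \<mu> t (Complex 0 R) (Complex (-R) R)
               + CI \<nu> \<mu> t (Complex (-R) R) (Complex (-R) 0)) \<le> exp M * c + exp M * R + exp M * R"
    using b1 b2 b3 norm_triangle_le[OF add_mono[OF norm_triangle_ineq order.refl]] by (smt (verit) norm_triangle_ineq)
  also have "\<dots> = (c + 2 * R) * exp M" by (simp add: algebra_simps)
  also have "\<dots> \<le> (c + 2 * R) * (exp (c * t - cos (\<nu> * phi0 \<nu>) * R powr \<nu>)
                          + exp (t * R * cos (phi0 \<nu>) + (3 * R) powr \<nu>))"
    using assms by (intro mult_left_mono) (auto simp: M_def max_def)
  finally show ?thesis .
qed

lemma D_bound:
  assumes "0 < \<nu>" "\<nu> < 1" "0 \<le> \<mu>" "0 < t" "0 < e" "e \<le> 1/2"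
  shows "norm (CI \<nu> \<mu> t (Complex (-e) 0) (Complex (-e) e) + CI \<nu> \<mu> t (Complex (-e) e) (Complex 0 e)
        + CI \<nu> \<mu> t (Complex 0 e) (Complex e e) + CI \<nu> \<mu> t (Complex e e) (Complex e 0))
         \<le> 4 * e * exp (t + 1 - \<mu> * ln e)"
proof -
  define M where "M = t + 1 - \<mu> * ln e"
  have pt: "Re (Zu \<nu> \<mu> t x) \<le> M" if "\<bar>Re x\<bar> \<le> e" "\<bar>Im x\<bar> \<le> e" "\<bar>Re x\<bar> = e \<or> \<bar>Im x\<bar> = e" for x
  proof -
    have "cmod x \<le> \<bar>Re x\<bar> + \<bar>Im x\<bar>" by (rule cmod_le)
    moreover have "\<bar>Im x\<bar> \<le> cmod x" "\<bar>Re x\<bar> \<le> cmod x" by (rule abs_Im_le_cmod, rule abs_Re_le_cmod)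
    ultimately have "e \<le> cmod x" "cmod x \<le> 1" using that assms by auto
    then show ?thesis unfolding M_def by (intro Zu_bound_small) (use assms in auto)
  qed
  have b1: "norm (CI \<nu> \<mu> t (Complex (-e) 0) (Complex (-e) e)) \<le> exp M * e"
  proof -
    have "norm (CI \<nu> \<mu> t (Complex (-e) 0) (Complex (-e) e)) \<le> exp M * norm (Complex (-e) e - Complex (-e) 0)"
    proof (rule seg_norm_bound)
      show "(Fu \<nu> \<mu> t has_contour_integral CI \<nu> \<mu> t (Complex (-e) 0) (Complex (-e) e)) (linepath (Complex (-e) 0) (Complex (-e) e))"
        by (rule CI_has[OF SL_props(1)[of e] SL_mem SL_mem SL_props(3)]) (use assms in auto)
      fix x assume "x \<in> closed_segment (Complex (-e) 0) (Complex (-e) e)"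
      from seg_bounds[OF this] assms have x: "Re x = -e" "0 \<le> Im x" "Im x \<le> e" by auto
      then show "Re (Zu \<nu> \<mu> t x) \<le> M" using assms by (intro pt) auto
    qed
    then show ?thesis using assms by (simp add: Complex_diff_Complex complex_norm)
  qed
  have b2: "norm (CI \<nu> \<mu> t (Complex (-e) e) (Complex 0 e)) \<le> exp M * e"
  proof -
    have "norm (CI \<nu> \<mu> t (Complex (-e) e) (Complex 0 e)) \<le> exp M * norm (Complex 0 e - Complex (-e) e)"
    proof (rule seg_norm_bound)
      show "(Fu \<nu> \<mu> t has_contour_integral CI \<nu> \<mu> t (Complex (-e) e) (Complex 0 e)) (linepath (Complex (-e) e) (Complex 0 e))"
        by (rule CI_has[OF SL_props(1)[of e] SL_mem SL_mem SL_props(3)]) (use assms in auto)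
      fix x assume "x \<in> closed_segment (Complex (-e) e) (Complex 0 e)"
      from seg_bounds[OF this] assms have x: "Im x = e" "-e \<le> Re x" "Re x \<le> 0" by auto
      then show "Re (Zu \<nu> \<mu> t x) \<le> M" using assms by (intro pt) auto
    qed
    then show ?thesis using assms by (simp add: Complex_diff_Complex complex_norm)
  qed
  have b3: "norm (CI \<nu> \<mu> t (Complex 0 e) (Complex e e)) \<le> exp M * e"
  proof -
    have "norm (CI \<nu> \<mu> t (Complex 0 e) (Complex e e)) \<le> exp M * norm (Complex e e - Complex 0 e)"
    proof (rule seg_norm_bound)
      show "(Fu \<nu> \<mu> t has_contour_integral CI \<nu> \<mu> t (Complex 0 e) (Complex e e)) (linepath (Complex 0 e) (Complex e e))"
        by (rule CI_has[OF SR_props(1)[of e] SR_mem SR_mem SR_props(3)]) (use assms in auto)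
      fix x assume "x \<in> closed_segment (Complex 0 e) (Complex e e)"
      from seg_bounds[OF this] assms have x: "Im x = e" "0 \<le> Re x" "Re x \<le> e" by auto
      then show "Re (Zu \<nu> \<mu> t x) \<le> M" using assms by (intro pt) auto
    qed
    then show ?thesis using assms by (simp add: Complex_diff_Complex complex_norm)
  qed
  have b4: "norm (CI \<nu> \<mu> t (Complex e e) (Complex e 0)) \<le> exp M * e"
  proof -
    have "norm (CI \<nu> \<mu> t (Complex e e) (Complex e 0)) \<le> exp M * norm (Complex e 0 - Complex e e)"
    proof (rule seg_norm_bound)
      show "(Fu \<nu> \<mu> t has_contour_integral CI \<nu> \<mu> t (Complex e e) (Complex e 0)) (linepath (Complex e e) (Complex e 0))"
        by (rule CI_has[OF SR_props(1)[of e] SR_mem SR_mem SR_props(3)]) (use assms in auto)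
      fix x assume "x \<in> closed_segment (Complex e e) (Complex e 0)"
      from seg_bounds[OF this] assms have x: "Re x = e" "0 \<le> Im x" "Im x \<le> e" by auto
      then show "Re (Zu \<nu> \<mu> t x) \<le> M" using assms by (intro pt) auto
    qed
    then show ?thesis using assms by (simp add: Complex_diff_Complex complex_norm)
  qed
  have "norm (CI \<nu> \<mu> t (Complex (-e) 0) (Complex (-e) e) + CI \<nu> \<mu> t (Complex (-e) e) (Complex 0 e)
        + CI \<nu> \<mu> t (Complex 0 e) (Complex e e) + CI \<nu> \<mu> t (Complex e e) (Complex e 0))
        \<le> exp M * e + exp M * e + exp M * e + exp M * e"
    using b1 b2 b3 b4 by (smt (verit) norm_triangle_ineq)
  then show ?thesis by (simp add: M_def algebra_simps)
qed




lemma HK_to_lborel: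
  fixes f :: "real \<Rightarrow> real"
  assumes "f integrable_on S" "\<And>x. x \<in> S \<Longrightarrow> 0 \<le> f x"
    and "(\<lambda>x. indicator S x *\<^sub>R f x) \<in> borel_measurable borel"
  shows "set_integrable lborel S f"
proof -
  have "f absolutely_integrable_on S"
    using assms by (intro nonnegative_absolutely_integrable_1) auto
  then have "integrable lebesgue (\<lambda>x. indicator S x *\<^sub>R f x)"
    unfolding set_integrable_def .
  then show ?thesis unfolding set_integrable_def
    using assms(3) by (subst (asm) integrable_completion) auto
qed

lemma powr_m2_integrable:
  assumes "0 < Y"
  shows "set_integrable lborel {Y..} (\<lambda>x::real. x powr (-2))"
proof (rule HK_to_lborel)
  show "(\<lambda>x::real. x powr (-2)) integrable_on {Y..}"
    using has_integral_powr_to_inf[of "-2" Y] assms unfolding integrable_on_def by auto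
  show "(\<lambda>x. indicator {Y..} x *\<^sub>R x powr (-2)) \<in> borel_measurable borel"
    by measurable
qed auto

lemma lborel_tail:
  fixes f :: "real \<Rightarrow> 'b::{banach, second_countable_topology}"
  assumes "0 < a" "continuous_on {a..} f" "eventually (\<lambda>y. norm (f y) \<le> y powr (-2)) at_top"
  shows "set_integrable lborel {a..} f"
proof -
  obtain Y0 where Y0: "\<And>y. y \<ge> Y0 \<Longrightarrow> norm (f y) \<le> y powr (-2)"
    using assms(3) unfolding eventually_at_top_linorder by blast
  define Y where "Y = max a Y0"
  have Ya: "a \<le> Y" "0 < Y" using assms(1) by (auto simp: Y_def)
  have i1: "set_integrable lborel {a..Y} f"
    by (rule borel_integrable_atLeastAtMost') (rule continuous_on_subset[OF assms(2)], auto)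
  have i2: "set_integrable lborel {Y..} f"
  proof (rule set_integrable_bound[OF powr_m2_integrable[OF Ya(2)]])
    show "set_borel_measurable lborel {Y..} f"
      unfolding set_borel_measurable_def measurable_lborel2
      using Ya by (intro borel_measurable_continuous_on_indicator)
                  (auto intro: continuous_on_subset[OF assms(2)])
    show "AE x in lborel. x \<in> {Y..} \<longrightarrow> norm (f x) \<le> norm (x powr (-2))"
      using Y0 by (intro AE_I2) (auto simp: Y_def)
  qed
  have "{a..} = {a..Y} \<union> {Y..}" using Ya by auto
  then show ?thesis using set_integrable_Un[OF i1 i2] by auto
qed



lemma eventually_powr_m2:
  fixes h :: "real \<Rightarrow> real"
  assumes "((\<lambda>y. y powr 2 * h y) \<longlongrightarrow> 0) at_top" "\<And>y. 0 \<le> h y"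
  shows "eventually (\<lambda>y. h y \<le> y powr (-2)) at_top"
proof -
  have "eventually (\<lambda>y. y powr 2 * h y < 1) at_top"
    using order_tendstoD(2)[OF assms(1), of 1] by simp
  moreover have "eventually (\<lambda>y::real. 0 < y) at_top" by (rule eventually_gt_at_top)
  ultimately show ?thesis
  proof eventually_elim
    case (elim y)
    then have "h y < 1 / y powr 2" by (simp add: field_simps)
    then show ?case using elim by (simp add: powr_minus divide_inverse)
  qed
qed

lemma cos_lower:
  assumes "0 < \<nu>" "\<nu> < 1" "\<bar>\<theta>\<bar> \<le> pi/2"
  shows "cos (\<nu> * pi / 2) \<le> cos (\<nu> * \<theta>)"
proof -
  have "cos (\<nu> * \<theta>) = cos \<bar>\<nu> * \<theta>\<bar>" by simp
  also have "cos (\<nu> * pi / 2) \<le> cos \<bar>\<nu> * \<theta>\<bar>"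
  proof (rule cos_monotone_0_pi_le)
    have "\<bar>\<nu> * \<theta>\<bar> = \<nu> * \<bar>\<theta>\<bar>" using assms by (simp add: abs_mult)
    also have "\<dots> \<le> \<nu> * (pi/2)" using assms by (intro mult_left_mono) auto
    finally show "\<bar>\<nu> * \<theta>\<bar> \<le> \<nu> * pi / 2" by simp
    show "\<nu> * pi / 2 \<le> pi" using assms pi_gt_zero by (simp add: field_simps)
  qed auto
  finally show ?thesis .
qed

lemma Fbc_bound:
  assumes "0 < \<nu>" "\<nu> < 1" "0 \<le> \<mu>" "0 < t" "0 < c"
  shows "norm (Fb \<nu> \<mu> t (Complex c y)) \<le> exp (c * t) * c powr (- \<mu>) * exp (- cos (\<nu> * pi / 2) * \<bar>y\<bar> powr \<nu>)"
proof -
  define s where "s = Complex c y"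
  have s0: "s \<noteq> 0" using assms by (auto simp: s_def complex_eq_iff)
  have Res: "Re s = c" "Im s = y" by (auto simp: s_def)
  have n1: "norm (exp (s * complex_of_real t)) = exp (c * t)" using Res by simp
  have n2: "norm (s powr (- complex_of_real \<mu>)) \<le> c powr (- \<mu>)"
  proof -
    have "norm (s powr (- complex_of_real \<mu>)) = cmod s powr (- \<mu>)"
      by (subst norm_powr_real_powr') auto
    also have "\<dots> \<le> c powr (- \<mu>)"
      using assms abs_Re_le_cmod[of s] Res by (intro powr_mono2') auto
    finally show ?thesis .
  qed
  have n3: "norm (exp (- (s powr complex_of_real \<nu>))) \<le> exp (- cos (\<nu> * pi / 2) * \<bar>y\<bar> powr \<nu>)"
  proof -
    define \<theta> where "\<theta> = Im (Ln s)"
    have th: "\<bar>\<theta>\<bar> \<le> pi/2" unfolding \<theta>_def using Res assms s0 by (subst Re_Ln_pos_le) auto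
    have "Re (s powr complex_of_real \<nu>) = cmod s powr \<nu> * cos (\<nu> * \<theta>)"
      using s0 by (simp add: powr_def Re_exp \<theta>_def mult.commute)
    moreover have "\<bar>y\<bar> powr \<nu> \<le> cmod s powr \<nu>"
      using abs_Im_le_cmod[of s] Res assms by (intro powr_mono2) auto
    moreover have "cos (\<nu> * pi / 2) \<le> cos (\<nu> * \<theta>)" by (rule cos_lower) (use assms th in auto)
    moreover have "0 \<le> cos (\<nu> * pi / 2)"
    proof -
      have "0 < \<nu> * pi" "\<nu> * pi < pi" using assms pi_gt_zero by auto
      then show ?thesis by (intro cos_ge_zero) linarith+
    qed
    ultimately have "cos (\<nu> * pi / 2) * \<bar>y\<bar> powr \<nu> \<le> Re (s powr complex_of_real \<nu>)"
      by (metis mult.commute mult_mono powr_ge_zero)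
    then show ?thesis by simp
  qed
  have "norm (Fb \<nu> \<mu> t s) = exp (c * t) * norm (s powr (- complex_of_real \<mu>)) * norm (exp (- (s powr complex_of_real \<nu>)))"
    unfolding Fb_def by (simp add: norm_mult n1 Res)
  also have "\<dots> \<le> exp (c * t) * c powr (- \<mu>) * exp (- cos (\<nu> * pi / 2) * \<bar>y\<bar> powr \<nu>)"
    using n2 n3 by (intro mult_mono mult_left_mono) auto
  finally show ?thesis by (simp add: s_def)
qed



lemma Fbc_cont:
  assumes "0 < c"
  shows "continuous_on UNIV (\<lambda>y. Fb \<nu> \<mu> t (Complex c y))"
  unfolding Fb_def using assms
  by (intro continuous_intros) (auto simp: Complex_eq complex_eq_iff)




lemma t2: "((\<lambda>y. y powr 2 * exp (- \<kappa> * y powr \<nu>)) \<longlongrightarrow> 0) at_top" if "0 < \<kappa>" "0 < \<nu>" for \<nu> \<kappa> :: real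
  using that by real_asymp
lemma Fbc_integrable:
  assumes "0 < \<nu>" "\<nu> < 1" "0 \<le> \<mu>" "0 < t" "0 < c"
  shows "integrable lborel (\<lambda>y. Fb \<nu> \<mu> t (Complex c y))"
proof -
  define \<kappa> where "\<kappa> = cos (\<nu> * pi / 2)"
  have \<kappa>: "0 < \<kappa>"
  proof -
    have "0 < \<nu> * pi" "\<nu> * pi < pi" using assms pi_gt_zero by auto
    then show ?thesis unfolding \<kappa>_def by (intro cos_gt_zero) auto
  qed
  define g where "g = (\<lambda>y::real. exp (- \<kappa> * \<bar>y\<bar> powr \<nu>))"
  have gc: "continuous_on A g" for A
    unfolding g_def using assms by (intro continuous_intros continuous_on_powr') auto
  have i1: "set_integrable lborel {0..1} g" by (rule borel_integrable_atLeastAtMost'[OF gc])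
  have i2: "set_integrable lborel {1..} g"
  proof (rule lborel_tail[OF _ gc])
    have l: "((\<lambda>y. y powr 2 * exp (- \<kappa> * y powr \<nu>)) \<longlongrightarrow> 0) at_top"
      by (rule t2[OF \<kappa> assms(1)])
    have ev: "eventually (\<lambda>y::real. y powr 2 * exp (- \<kappa> * y powr \<nu>) = y powr 2 * g y) at_top"
      using eventually_gt_at_top[of 0] by eventually_elim (simp add: g_def)
    have "((\<lambda>y. y powr 2 * g y) \<longlongrightarrow> 0) at_top"
      by (rule Lim_transform_eventually[OF l ev])
    then have "eventually (\<lambda>y. g y \<le> y powr (-2)) at_top"
      by (rule eventually_powr_m2) (simp add: g_def)
    then show "eventually (\<lambda>y. norm (g y) \<le> y powr (-2)) at_top"
      by eventually_elim (simp add: g_def)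
  qed auto
  have "set_integrable lborel ({0..1} \<union> {1..}) g" by (rule set_integrable_Un[OF i1 i2]) auto
  moreover have "{0..1} \<union> {1..} = {0::real..}" by auto
  ultimately have i3: "integrable lborel (\<lambda>x. indicator {0..} x *\<^sub>R g x)"
    unfolding set_integrable_def by simp
  have i4: "integrable lborel (\<lambda>x. indicator {0..} (0 + (-1) * x) *\<^sub>R g (0 + (-1) * x))"
    using lborel_integrable_real_affine_iff[of "-1" "\<lambda>x. indicator {0..} x *\<^sub>R g x" 0] i3 by simp
  define K where "K = exp (c * t) * c powr (- \<mu>)"
  have K: "0 \<le> K" by (simp add: K_def)
  show ?thesis
  proof (rule Bochner_Integration.integrable_bound)
    show "integrable lborel (\<lambda>x. K * (indicator {0..} x *\<^sub>R g x + indicator {0..} (0 + (-1) * x) *\<^sub>R g (0 + (-1) * x)))"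
      by (rule integrable_mult_right) (rule Bochner_Integration.integrable_add[OF i3 i4])
    show "(\<lambda>y. Fb \<nu> \<mu> t (Complex c y)) \<in> borel_measurable lborel"
      using Fbc_cont[OF assms(5)] by (simp add: borel_measurable_continuous_onI)
    show "AE x in lborel. norm (Fb \<nu> \<mu> t (Complex c x)) \<le>
        norm (K * (indicator {0..} x *\<^sub>R g x + indicator {0..} (0 + (-1) * x) *\<^sub>R g (0 + (-1) * x)))"
    proof (rule AE_I2)
      fix x :: real
      have "norm (Fb \<nu> \<mu> t (Complex c x)) \<le> K * g x"
        using Fbc_bound[OF assms, of x] unfolding K_def g_def \<kappa>_def by simp
      also have "g x \<le> indicator {0..} x *\<^sub>R g x + indicator {0..} (0 + (-1) * x) *\<^sub>R g (0 + (-1) * x)"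
        by (cases "0 \<le> x") (auto simp: g_def)
      then have "K * g x \<le> K * (indicator {0..} x *\<^sub>R g x + indicator {0..} (0 + (-1) * x) *\<^sub>R g (0 + (-1) * x))"
        using K by (intro mult_left_mono) auto
      also have "\<dots> = norm (K * (indicator {0..} x *\<^sub>R g x + indicator {0..} (0 + (-1) * x) *\<^sub>R g (0 + (-1) * x)))"
      proof -
        have "0 \<le> K * (indicator {0..} x *\<^sub>R g x + indicator {0..} (0 + (-1) * x) *\<^sub>R g (0 + (-1) * x))"
          using K by (intro mult_nonneg_nonneg add_nonneg_nonneg) (auto simp: g_def)
        then show ?thesis by (simp only: real_norm_def abs_of_nonneg)
      qed
      finally show "norm (Fb \<nu> \<mu> t (Complex c x)) \<le> norm (K * (indicator {0..} x *\<^sub>R g x + indicator {0..} (0 + (-1) * x) *\<^sub>R g (0 + (-1) * x)))" .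
    qed
  qed
qed




lemma t3: "((\<lambda>u. u powr 2 * exp (- u * t + u powr \<nu>)) \<longlongrightarrow> 0) at_top" if "0 < t" "\<nu> < 1" for \<nu> t :: real
  using that by real_asymp

lemma G_meas: "G \<nu> \<mu> t \<in> borel_measurable borel"
  unfolding G_def by measurable

lemma G_abs_bound:
  assumes "0 < \<nu>" "0 < t" "0 < u"
  shows "\<bar>G \<nu> \<mu> t u\<bar> \<le> u powr (- \<mu>) * exp (- u * t + u powr \<nu>)"
proof -
  have "\<bar>G \<nu> \<mu> t u\<bar> = u powr (- \<mu>) * exp (- u * t - u powr \<nu> * cos (pi * \<nu>)) * \<bar>sin (u powr \<nu> * sin (pi * \<nu>) + pi * \<mu>)\<bar>"
    unfolding G_def by (simp add: abs_mult)
  also have "\<dots> \<le> u powr (- \<mu>) * exp (- u * t - u powr \<nu> * cos (pi * \<nu>)) * 1"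
    by (intro mult_left_mono) auto
  also have "\<dots> \<le> u powr (- \<mu>) * exp (- u * t + u powr \<nu>)"
  proof -
    have "- (u powr \<nu> * cos (pi * \<nu>)) \<le> u powr \<nu>"
    proof -
      have "u powr \<nu> * (- cos (pi * \<nu>)) \<le> u powr \<nu> * 1" by (intro mult_left_mono) auto
      then show ?thesis by simp
    qed
    then have "exp (- u * t - u powr \<nu> * cos (pi * \<nu>)) \<le> exp (- u * t + u powr \<nu>)" by simp
    then show ?thesis by (simp add: mult_left_mono)
  qed
  finally show ?thesis .
qed

lemma G_integrable:
  assumes "0 < \<nu>" "\<nu> < 1" "0 \<le> \<mu>" "\<mu> < 1" "0 < t"
  shows "set_integrable lborel {0..} (G \<nu> \<mu> t)"
proof -
  have j1: "set_integrable lborel {0..1} (\<lambda>u::real. u powr (- \<mu>))"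
  proof (rule HK_to_lborel)
    show "(\<lambda>u::real. u powr (- \<mu>)) integrable_on {0..1}"
      using assms by (intro integrable_on_powr_from_0) auto
    show "(\<lambda>x. indicator {0..1} x *\<^sub>R x powr (- \<mu>)) \<in> borel_measurable borel" by measurable
  qed auto
  have i1: "set_integrable lborel {0..1} (G \<nu> \<mu> t)"
  proof (rule set_integrable_bound[OF set_integrable_mult_right[OF j1, of "exp 1"]])
    show "set_borel_measurable lborel {0..1} (G \<nu> \<mu> t)"
      unfolding set_borel_measurable_def using G_meas by measurable
    show "AE x in lborel. x \<in> {0..1} \<longrightarrow> norm (G \<nu> \<mu> t x) \<le> norm (exp 1 * x powr (- \<mu>))"
    proof (rule AE_I2, safe)
      fix x :: real assume x: "x \<in> {0..1}"
      show "norm (G \<nu> \<mu> t x) \<le> norm (exp 1 * x powr (- \<mu>))"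
      proof (cases "x = 0")
        case True then show ?thesis by (simp add: G_def)
      next
        case False
        then have xp: "0 < x" using x by auto
        have "\<bar>G \<nu> \<mu> t x\<bar> \<le> x powr (- \<mu>) * exp (- x * t + x powr \<nu>)"
          by (rule G_abs_bound) (use assms xp in auto)
        also have "\<dots> \<le> x powr (- \<mu>) * exp 1"
        proof -
          have "x powr \<nu> \<le> 1" using x assms by (intro powr_le1) auto
          moreover have "0 \<le> x * t" using xp assms by auto
          ultimately have "- x * t + x powr \<nu> \<le> 1" by linarith
          then show ?thesis by (intro mult_left_mono) auto
        qed
        finally show ?thesis by (simp add: mult.commute)
      qed
    qed
  qed
  have i2: "set_integrable lborel {1..} (G \<nu> \<mu> t)"
  proof (rule lborel_tail)
    show "continuous_on {1..} (G \<nu> \<mu> t)"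
      unfolding G_def by (intro continuous_intros) auto
    have ev: "eventually (\<lambda>u. exp (- u * t + u powr \<nu>) \<le> u powr (-2)) at_top"
      by (rule eventually_powr_m2[OF t3]) (use assms in auto)
    show "eventually (\<lambda>u. norm (G \<nu> \<mu> t u) \<le> u powr (-2)) at_top"
      using ev eventually_ge_at_top[of "1::real"]
    proof eventually_elim
      case (elim u)
      have "\<bar>G \<nu> \<mu> t u\<bar> \<le> u powr (- \<mu>) * exp (- u * t + u powr \<nu>)"
        by (rule G_abs_bound) (use assms elim in auto)
      also have "\<dots> \<le> 1 * exp (- u * t + u powr \<nu>)"
      proof (intro mult_right_mono)
        have "u powr (- \<mu>) \<le> 1 powr (- \<mu>)" using elim assms by (intro powr_mono2') auto
        then show "u powr (- \<mu>) \<le> 1" by simp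
      qed auto
      finally show ?case using elim by simp
    qed
  qed auto
  have "set_integrable lborel ({0..1} \<union> {1..}) (G \<nu> \<mu> t)" by (rule set_integrable_Un[OF i1 i2]) auto
  moreover have "{0..1} \<union> {1..} = {0::real..}" by auto
  ultimately show ?thesis by simp
qed



lemma t4: "((\<lambda>e. 4 * e * exp (t + 1 - \<mu> * ln e)) \<longlongrightarrow> 0) (at_right 0)" if "\<mu> < 1" for \<mu> t :: real
  using that by real_asymp

lemma t5a: "((\<lambda>R::real. (c + 2*R) * (exp (c*t - k * R powr \<nu>) + exp (-b*R + (3*R) powr \<nu>))) \<longlongrightarrow> 0) at_top"
  if "k > 0" "b > 0" "0 < \<nu>" "\<nu> < 1" for c t k b \<nu> :: real
  using that by real_asymp

lemma t5: "((\<lambda>R. (c + 2 * R) * (exp (c * t - k * R powr \<nu>) + exp (t * R * q + (3 * R) powr \<nu>))) \<longlongrightarrow> 0) at_top"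
  if "0 < k" "q < 0" "0 < t" "0 < \<nu>" "\<nu> < 1" for c t k q \<nu> :: real
proof -
  have "((\<lambda>R. (c + 2 * R) * (exp (c * t - k * R powr \<nu>) + exp (- (t * (- q)) * R + (3 * R) powr \<nu>))) \<longlongrightarrow> 0) at_top"
    using that by (intro t5a) (auto simp: mult_pos_neg)
  then show ?thesis by (simp add: algebra_simps)
qed

definition Dn where "Dn \<nu> \<mu> t e = CI \<nu> \<mu> t (Complex (-e) 0) (Complex (-e) e) + CI \<nu> \<mu> t (Complex (-e) e) (Complex 0 e)
        + CI \<nu> \<mu> t (Complex 0 e) (Complex e e) + CI \<nu> \<mu> t (Complex e e) (Complex e 0)"

definition En where "En \<nu> \<mu> t c R = CI \<nu> \<mu> t (Complex c R) (Complex 0 R) + CI \<nu> \<mu> t (Complex 0 R) (Complex (-R) R)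
               + CI \<nu> \<mu> t (Complex (-R) R) (Complex (-R) 0)"

lemma main_identity:
  assumes "0 < c" "0 < e" "e < c" "e < R"
  shows "Re (integral {0..R} (\<lambda>y. Fb \<nu> \<mu> t (Complex c y))) + Im (En \<nu> \<mu> t c R)
         = integral {e..R} (G \<nu> \<mu> t) - Im (Dn \<nu> \<mu> t e)"
proof -
  have "Im (CI \<nu> \<mu> t (Complex (-R) 0) (Complex (-e) 0)
     + (CI \<nu> \<mu> t (Complex (-e) 0) (Complex (-e) e) + CI \<nu> \<mu> t (Complex (-e) e) (Complex 0 e)
        + CI \<nu> \<mu> t (Complex 0 e) (Complex e e) + CI \<nu> \<mu> t (Complex e e) (Complex e 0))
     + CI \<nu> \<mu> t (Complex e 0) (Complex c 0)
     + CI \<nu> \<mu> t (Complex c 0) (Complex c R)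
     + (CI \<nu> \<mu> t (Complex c R) (Complex 0 R) + CI \<nu> \<mu> t (Complex 0 R) (Complex (-R) R)
        + CI \<nu> \<mu> t (Complex (-R) R) (Complex (-R) 0))) = 0"
    using contour_identity[OF assms(2,3,4), of \<nu> \<mu> t] by simp
  then have "Im (CI \<nu> \<mu> t (Complex (-R) 0) (Complex (-e) 0)) + Im (Dn \<nu> \<mu> t e)
     + Im (CI \<nu> \<mu> t (Complex e 0) (Complex c 0)) + Im (CI \<nu> \<mu> t (Complex c 0) (Complex c R))
     + Im (En \<nu> \<mu> t c R) = 0"
    unfolding Dn_def En_def by simp
  then show ?thesis
    using N_eq[OF assms(2,4)] P_eq[OF assms(2,3)] V_eq[OF assms(1), of R] assms by simp
qed



lemma drop0a: "(LBINT u:{0..R}. f u) = (LBINT u:{0<..R}. f u)" for f :: "real \<Rightarrow> 'b::{banach, second_countable_topology}"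
  by (rule set_integral_discrete_difference[where X="{0}"]) auto

lemma drop0b: "(LBINT u:{0..}. f u) = (LBINT u:{0<..}. f u)" for f :: "real \<Rightarrow> 'b::{banach, second_countable_topology}"
  by (rule set_integral_discrete_difference[where X="{0}"]) auto

lemma stage1:
  assumes "0 < \<nu>" "\<nu> < 1" "0 \<le> \<mu>" "\<mu> < 1" "0 < t" "0 < c" "1 \<le> R"
  shows "Re (LBINT y:{0..R}. Fb \<nu> \<mu> t (Complex c y)) + Im (En \<nu> \<mu> t c R) = (LBINT u:{0<..R}. G \<nu> \<mu> t u)"
proof -
  define L where "L = Re (LBINT y:{0..R}. Fb \<nu> \<mu> t (Complex c y)) + Im (En \<nu> \<mu> t c R)"
  have Fint: "set_integrable lborel {0..R} (\<lambda>y. Fb \<nu> \<mu> t (Complex c y))"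
    unfolding set_integrable_def
    by (intro integrable_mult_indicator Fbc_integrable) (use assms in auto)
  have L_eq: "(LBINT y:{0..R}. Fb \<nu> \<mu> t (Complex c y)) = integral {0..R} (\<lambda>y. Fb \<nu> \<mu> t (Complex c y))"
    by (rule set_borel_integral_eq_integral(2)[OF Fint])
  have Gint: "\<And>A. A \<in> sets lborel \<Longrightarrow> A \<subseteq> {0..} \<Longrightarrow> set_integrable lborel A (G \<nu> \<mu> t)"
    using set_integrable_subset[OF G_integrable[OF assms(1-5)]] by blast
  have ev: "eventually (\<lambda>e. L = (LBINT u:{e..R}. G \<nu> \<mu> t u) - Im (Dn \<nu> \<mu> t e)) (at_right 0)"
  proof -
    have "eventually (\<lambda>e. e \<in> {0<..<min c (1/2)}) (at_right (0::real))"
      by (rule eventually_at_right_real) (use assms in auto)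
    then show ?thesis
    proof eventually_elim
      case (elim e)
      then have e: "0 < e" "e < c" "e < R" using assms by auto
      have "L = integral {e..R} (G \<nu> \<mu> t) - Im (Dn \<nu> \<mu> t e)"
        unfolding L_def L_eq by (rule main_identity) (use assms e in auto)
      also have "integral {e..R} (G \<nu> \<mu> t) = (LBINT u:{e..R}. G \<nu> \<mu> t u)"
        by (rule set_borel_integral_eq_integral(2)[symmetric], rule Gint) (use e in auto)
      finally show ?case .
    qed
  qed
  have lim1: "((\<lambda>e. LBINT u:{e..R}. G \<nu> \<mu> t u) \<longlongrightarrow> (LBINT u:{0<..R}. G \<nu> \<mu> t u)) (at_right 0)"
    by (rule tendsto_set_lebesgue_integral_at_right) (use assms in \<open>auto intro!: Gint\<close>)
  have lim2: "((\<lambda>e. Im (Dn \<nu> \<mu> t e)) \<longlongrightarrow> 0) (at_right 0)"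
  proof (rule Lim_null_comparison)
    show "((\<lambda>e. 4 * e * exp (t + 1 - \<mu> * ln e)) \<longlongrightarrow> 0) (at_right 0)" by (rule t4) (use assms in auto)
    have "eventually (\<lambda>e. e \<in> {0<..<1/2}) (at_right (0::real))"
      by (rule eventually_at_right_real) auto
    then show "eventually (\<lambda>e. norm (Im (Dn \<nu> \<mu> t e)) \<le> 4 * e * exp (t + 1 - \<mu> * ln e)) (at_right 0)"
    proof eventually_elim
      case (elim e)
      have "norm (Im (Dn \<nu> \<mu> t e)) \<le> norm (Dn \<nu> \<mu> t e)" using abs_Im_le_cmod by simp
      also have "\<dots> \<le> 4 * e * exp (t + 1 - \<mu> * ln e)"
        unfolding Dn_def by (rule D_bound) (use assms elim in auto)
      finally show ?case .
    qed
  qed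
  have "((\<lambda>e. (LBINT u:{e..R}. G \<nu> \<mu> t u) - Im (Dn \<nu> \<mu> t e)) \<longlongrightarrow> (LBINT u:{0<..R}. G \<nu> \<mu> t u) - 0) (at_right 0)"
    by (intro tendsto_diff lim1 lim2)
  then have T: "((\<lambda>e. (LBINT u:{e..R}. G \<nu> \<mu> t u) - Im (Dn \<nu> \<mu> t e)) \<longlongrightarrow> (LBINT u:{0<..R}. G \<nu> \<mu> t u)) (at_right 0)"
    by simp
  have ev': "eventually (\<lambda>e. (LBINT u:{e..R}. G \<nu> \<mu> t u) - Im (Dn \<nu> \<mu> t e) = L) (at_right 0)"
    using ev by eventually_elim simp
  have "((\<lambda>e. L) \<longlongrightarrow> (LBINT u:{0<..R}. G \<nu> \<mu> t u)) (at_right (0::real))"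
    by (rule Lim_transform_eventually[OF T ev'])
  then have "L = (LBINT u:{0<..R}. G \<nu> \<mu> t u)"
    using tendsto_unique[OF _ tendsto_const] by (metis trivial_limit_at_right_real)
  then show ?thesis by (simp add: L_def)
qed



lemma stage2:
  assumes "0 < \<nu>" "\<nu> < 1" "0 \<le> \<mu>" "\<mu> < 1" "0 < t" "0 < c"
  shows "Re (LBINT y:{0..}. Fb \<nu> \<mu> t (Complex c y)) = (LBINT u:{0<..}. G \<nu> \<mu> t u)"
proof -
  have Fint: "set_integrable lborel {0..} (\<lambda>y. Fb \<nu> \<mu> t (Complex c y))"
    unfolding set_integrable_def
    by (intro integrable_mult_indicator Fbc_integrable) (use assms in auto)
  have Gint: "set_integrable lborel {0..} (G \<nu> \<mu> t)" by (rule G_integrable[OF assms(1-5)])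
  have limA: "((\<lambda>R. LBINT y:{0..R}. Fb \<nu> \<mu> t (Complex c y)) \<longlongrightarrow> (LBINT y:{0..}. Fb \<nu> \<mu> t (Complex c y))) at_top"
    by (rule tendsto_set_lebesgue_integral_at_top[OF _ Fint]) auto
  have limE: "((\<lambda>R. Im (En \<nu> \<mu> t c R)) \<longlongrightarrow> 0) at_top"
  proof (rule Lim_null_comparison)
    show "((\<lambda>R. (c + 2 * R) * (exp (c * t - cos (\<nu> * phi0 \<nu>) * R powr \<nu>)
                          + exp (t * R * cos (phi0 \<nu>) + (3 * R) powr \<nu>))) \<longlongrightarrow> 0) at_top"
      by (rule t5) (use assms phi0_props[OF assms(1,2)] in auto)
    show "eventually (\<lambda>R. norm (Im (En \<nu> \<mu> t c R)) \<le> (c + 2 * R) * (exp (c * t - cos (\<nu> * phi0 \<nu>) * R powr \<nu>)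
                          + exp (t * R * cos (phi0 \<nu>) + (3 * R) powr \<nu>))) at_top"
      using eventually_ge_at_top[of "max c 1"]
    proof eventually_elim
      case (elim R)
      have "norm (Im (En \<nu> \<mu> t c R)) \<le> norm (En \<nu> \<mu> t c R)" using abs_Im_le_cmod by simp
      also have "\<dots> \<le> (c + 2 * R) * (exp (c * t - cos (\<nu> * phi0 \<nu>) * R powr \<nu>)
                          + exp (t * R * cos (phi0 \<nu>) + (3 * R) powr \<nu>))"
        unfolding En_def by (rule E_bound) (use assms elim in auto)
      finally show ?case .
    qed
  qed
  have limG: "((\<lambda>R. LBINT u:{0..R}. G \<nu> \<mu> t u) \<longlongrightarrow> (LBINT u:{0..}. G \<nu> \<mu> t u)) at_top"
    by (rule tendsto_set_lebesgue_integral_at_top[OF _ Gint]) auto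
  have T: "((\<lambda>R. Re (LBINT y:{0..R}. Fb \<nu> \<mu> t (Complex c y)) + Im (En \<nu> \<mu> t c R))
           \<longlongrightarrow> Re (LBINT y:{0..}. Fb \<nu> \<mu> t (Complex c y)) + 0) at_top"
    by (intro tendsto_add tendsto_Re limA limE)
  have ev: "eventually (\<lambda>R. Re (LBINT y:{0..R}. Fb \<nu> \<mu> t (Complex c y)) + Im (En \<nu> \<mu> t c R)
             = (LBINT u:{0..R}. G \<nu> \<mu> t u)) at_top"
    using eventually_ge_at_top[of "max c 1"]
  proof eventually_elim
    case (elim R)
    show ?case unfolding drop0a[where f="G \<nu> \<mu> t"] by (rule stage1) (use assms elim in auto)
  qed
  have "((\<lambda>R. LBINT u:{0..R}. G \<nu> \<mu> t u) \<longlongrightarrow> Re (LBINT y:{0..}. Fb \<nu> \<mu> t (Complex c y)) + 0) at_top"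
    by (rule Lim_transform_eventually[OF T ev])
  then have "Re (LBINT y:{0..}. Fb \<nu> \<mu> t (Complex c y)) + 0 = (LBINT u:{0..}. G \<nu> \<mu> t u)"
    using limG tendsto_unique by (metis trivial_limit_at_top_linorder)
  then show ?thesis by (simp add: drop0b)
qed



lemma Fb_conj:
  assumes "0 < c"
  shows "Fb \<nu> \<mu> t (Complex c (- y)) = cnj (Fb \<nu> \<mu> t (Complex c y))"
proof -
  have e: "Complex c (- y) = cnj (Complex c y)" by (simp add: complex_eq_iff)
  have p: "cnj (Complex c y powr complex_of_real a) = cnj (Complex c y) powr complex_of_real a" for a
    using assms by (subst cnj_powr) auto
  have p2: "cnj (Complex c y powr (- complex_of_real a)) = cnj (Complex c y) powr (- complex_of_real a)" for a
    using assms by (subst cnj_powr) auto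
  show ?thesis unfolding Fb_def e by (simp add: exp_cnj p p2)
qed

theorem final:
  fixes \<nu> \<mu> c t :: real
  assumes "0 < \<nu>" and "\<nu> < 1" and "0 \<le> \<mu>" and "\<mu> < 1"
    and "0 < c" and "0 < t"
  shows "bromwich_f \<nu> \<mu> c t =
    complex_of_real ((1 / pi) *
      (LBINT u:{0<..}. u powr (- \<mu>) * exp (- u * t - u powr \<nu> * cos (pi * \<nu>))
                        * sin (u powr \<nu> * sin (pi * \<nu>) + pi * \<mu>)))"
proof -
  define f where "f = (\<lambda>y. Fb \<nu> \<mu> t (Complex c y))"
  have fint: "integrable lborel f" unfolding f_def by (rule Fbc_integrable) (use assms in auto)
  have B: "bromwich_f \<nu> \<mu> c t = complex_of_real (1 / (2 * pi)) * integral\<^sup>L lborel f"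
    unfolding bromwich_f_def f_def Fb_def by simp
  define X where "X = (LBINT y:{0..}. f y)"
  have split: "integral\<^sup>L lborel f = (LBINT y:{0..}. f y) + (LBINT y:{..<0}. f y)"
  proof -
    have "integral\<^sup>L lborel f = (LBINT y:({0..} \<union> {..<0}). f y)"
    proof -
      have "{0::real..} \<union> {..<0} = UNIV" by auto
      then show ?thesis unfolding set_lebesgue_integral_def by simp
    qed
    also have "\<dots> = (LBINT y:{0..}. f y) + (LBINT y:{..<0}. f y)"
      by (rule set_integral_Un) (auto simp: set_integrable_def intro!: integrable_mult_indicator fint)
    finally show ?thesis .
  qed
  have neg: "(LBINT y:{..<0}. f y) = cnj X"
  proof -
    have "(LBINT y:{..<0}. f y) = (LBINT y:{y. - y \<in> {..<0}}. f (- y))" by (rule set_integral_reflect)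
    also have "{y::real. - y \<in> {..<0}} = {0<..}" by auto
    also have "(LBINT y:{0<..}. f (- y)) = (LBINT y:{0<..}. cnj (f y))"
      unfolding f_def using Fb_conj[OF assms(5)] by simp
    also have "\<dots> = cnj (LBINT y:{0<..}. f y)"
      unfolding set_lebesgue_integral_def by (simp add: complex_cnj_scaleR[symmetric] del: complex_cnj_scaleR)
    also have "(LBINT y:{0<..}. f y) = X" unfolding X_def by (rule drop0b[symmetric])
    finally show ?thesis .
  qed
  have ReX: "Re X = (LBINT u:{0<..}. G \<nu> \<mu> t u)"
    unfolding X_def f_def by (rule stage2) (use assms in auto)
  have "integral\<^sup>L lborel f = complex_of_real (2 * Re X)"
    unfolding split neg X_def[symmetric] by (simp add: complex_add_cnj)
  then have "bromwich_f \<nu> \<mu> c t = complex_of_real ((1 / pi) * (LBINT u:{0<..}. G \<nu> \<mu> t u))"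
    unfolding B ReX by simp
  then show ?thesis unfolding G_def .
qed



theorem mainTheorem1:
  fixes \<nu> \<mu> c t :: real
  assumes "0 < \<nu>" and "\<nu> < 1" and "0 \<le> \<mu>" and "\<mu> < 1"
    and "0 < c" and "0 < t"
  shows "bromwich_f \<nu> \<mu> c t =
    complex_of_real ((1 / pi) *
      (LBINT u:{0<..}. u powr (- \<mu>) * exp (- u * t - u powr \<nu> * cos (pi * \<nu>))
                        * sin (u powr \<nu> * sin (pi * \<nu>) + pi * \<mu>)))"
  by (rule final[OF assms])

end
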